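(* Fix any $\alpha>1$. Consider Algorithm MWHVC (described in the context) run on a hypergraph $G=(V,E)$ of rank $f$ and maximum degree $\Delta$ with nonnegative vertex weights $w$, with parameters $\varepsilon\in(0,1]$, $\beta=\varepsilon/(f+\varepsilon)$ and multiplier $\alpha$. The number of iterations of the algorithm is $O\left(\log_\alpha\Delta + f\cdot\frac{\alpha}{\beta}\right)$.
   Context: Let $G=(V,E)$ be a hypergraph: each hyperedge is a nonempty subset of $V$ of size at most $f$ (rank $f$). Vertices have nonnegative weights $w(v)$. For $v\in V$, $E(v)=\{e\in E: v\in e\}$; $\Delta=\max_v |E(v)|\ge 3$. A hyperedge $e$ is covered by $C\subseteq V$ if $e\cap C\neq\emptyset$. The computation is distributed in synchronous rounds on the bipartite network with node set $V\cup E$ and a link between $v$ and $e$ iff $v\in e$. Parameters: $\varepsilon\in(0,1]$, $\beta=\varepsilon/(f+\varepsilon)$, and a multiplier $\alpha>1$. Algorithm MWHVC: Initialize $C\gets\emptyset$ and $E'(v)\gets E(v)$ for every $v$. Iteration $0$: every hyperedge $e$ sets $\mathrm{deal}_0(e)=\beta\cdot\min_{v\in e} w(v)/|E(v)|$ and $\delta_0(e)=\mathrm{deal}_0(e)$. For $i=1,2,\dots$: (a) every vertex $v\notin C$ (not terminated) checks whether $\sum_{e\in E(v)}\delta_{i-1}(e)\ge(1-\beta)w(v)$; if so, $v$ joins $C$, tells every $e\in E'(v)$ that $e$ is covered, and terminates. (b) Every uncovered hyperedge that receives such a message becomes covered, informs all its vertices, and terminates. (c) Every vertex $v\notin C$ that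 is told $e$ is covered sets $E'(v)\gets E'(v)\setminus\{e\}$; if $E'(v)=\emptyset$, $v$ terminates without joining $C$. (d) Every vertex $v\notin C$ sends "raise" to all $e\in E'(v)$ if $\sum_{e\in E'(v)}\mathrm{deal}_{i-1}(e)\le(\beta/\alpha)w(v)$, and otherwise sends "stuck" to all $e\in E'(v)$. (e) Every uncovered hyperedge $e$ sets $\mathrm{deal}_i(e)=\mathrm{deal}_{i-1}(e)$ if it received some "stuck" message, and $\mathrm{deal}_i(e)=\alpha\cdot\mathrm{deal}_{i-1}(e)$ otherwise, and $\delta_i(e)=\delta_{i-1}(e)+\mathrm{deal}_i(e)$. A vertex terminates when it is in $C$ or all its hyperedges are covered; a hyperedge terminates when covered. The number of iterations is the number of iterations until all nodes have terminated. *)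

theory Defs
  imports Main "HOL.Transcendental"
begin

definition Einc :: "'v set set \<Rightarrow> 'v \<Rightarrow> 'v set set" where
  "Einc E v = {e \<in> E. v \<in> e}"

definition Delta :: "'v set \<Rightarrow> 'v set set \<Rightarrow> nat" where
  "Delta V E = Max ((\<lambda>v. card (Einc E v)) ` V)"

text \<open>State of Algorithm MWHVC after an iteration.
  inC: the cover C; cov: covered hyperedges; Ep: E'(v); trm: terminated vertices;
  deal, dlt: deal_i(e) and delta_i(e).\<close>

record 'v mw_state =
  inC  :: "'v set"
  cov  :: "'v set set"
  Ep   :: "'v \<Rightarrow> 'v set set"
  trm  :: "'v set"
  deal :: "'v set \<Rightarrow> real"
  dlt  :: "'v set \<Rightarrow> real"

text \<open>Iteration 0.  Vertices without hyperedges are terminated from the start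
  (all their hyperedges are covered, vacuously).\<close>

definition mw_init :: "'v set \<Rightarrow> 'v set set \<Rightarrow> ('v \<Rightarrow> real) \<Rightarrow> real \<Rightarrow> 'v mw_state" where
  "mw_init V E w \<beta> =
     (let d = (\<lambda>e. \<beta> * Min ((\<lambda>v. w v / real (card (Einc E v))) ` e)) in
     \<lparr> inC = {}, cov = {}, Ep = Einc E, trm = {v \<in> V. Einc E v = {}},
       deal = d, dlt = d \<rparr>)"

definition mw_step :: "'v set \<Rightarrow> 'v set set \<Rightarrow> ('v \<Rightarrow> real) \<Rightarrow> real \<Rightarrow> real
    \<Rightarrow> 'v mw_state \<Rightarrow> 'v mw_state" where
  "mw_step V E w \<beta> \<alpha> s =
    (let
       \<comment> \<open>(a) non-terminated vertices whose dual sum is large join C\<close>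
       J = {v \<in> V. v \<notin> trm s \<and> (\<Sum>e\<in>Einc E v. dlt s e) \<ge> (1 - \<beta>) * w v};
       C' = inC s \<union> J;
       \<comment> \<open>(b) hyperedges told by a joining vertex become covered\<close>
       NC = {e \<in> E. e \<notin> cov s \<and> (\<exists>v\<in>J. e \<in> Ep s v)};
       Cov' = cov s \<union> NC;
       \<comment> \<open>(c) remaining vertices drop newly covered hyperedges; terminate if none left\<close>
       Ep' = (\<lambda>v. if v \<in> V \<and> v \<notin> trm s \<and> v \<notin> J then Ep s v - {e \<in> NC. v \<in> e} else Ep s v);
       T' = trm s \<union> J \<union> {v \<in> V. v \<notin> trm s \<and> v \<notin> J \<and> Ep' v = {}};
       \<comment> \<open>(d) remaining vertices send raise / stuck\<close>
       stuck = (\<lambda>v. (\<Sum>e\<in>Ep' v. deal s e) > (\<beta> / \<alpha>) * w v);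
       gotstuck = (\<lambda>e. \<exists>v \<in> V - T'. e \<in> Ep' v \<and> stuck v);
       \<comment> \<open>(e) uncovered hyperedges update deal and delta\<close>
       deal' = (\<lambda>e. if e \<in> E \<and> e \<notin> Cov' \<and> \<not> gotstuck e then \<alpha> * deal s e else deal s e);
       dlt' = (\<lambda>e. if e \<in> E \<and> e \<notin> Cov' then dlt s e + deal' e else dlt s e)
     in \<lparr> inC = C', cov = Cov', Ep = Ep', trm = T', deal = deal', dlt = dlt' \<rparr>)"

primrec mw_run :: "'v set \<Rightarrow> 'v set set \<Rightarrow> ('v \<Rightarrow> real) \<Rightarrow> real \<Rightarrow> real
    \<Rightarrow> nat \<Rightarrow> 'v mw_state" where
  "mw_run V E w \<beta> \<alpha> 0 = mw_init V E w \<beta>"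
| "mw_run V E w \<beta> \<alpha> (Suc i) = mw_step V E w \<beta> \<alpha> (mw_run V E w \<beta> \<alpha> i)"

definition mw_all_terminated :: "'v set \<Rightarrow> 'v set set \<Rightarrow> ('v \<Rightarrow> real) \<Rightarrow> real \<Rightarrow> real
    \<Rightarrow> nat \<Rightarrow> bool" where
  "mw_all_terminated V E w \<beta> \<alpha> i =
     (trm (mw_run V E w \<beta> \<alpha> i) = V \<and> cov (mw_run V E w \<beta> \<alpha> i) = E)"

definition mw_iterations :: "'v set \<Rightarrow> 'v set set \<Rightarrow> ('v \<Rightarrow> real) \<Rightarrow> real \<Rightarrow> real \<Rightarrow> nat" where
  "mw_iterations V E w \<beta> \<alpha> = (LEAST i. mw_all_terminated V E w \<beta> \<alpha> i)"

end

theory Submission imports Defs begin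

locale mw =
  fixes V :: "'v set" and E :: "'v set set" and w :: "'v \<Rightarrow> real"
    and \<beta> :: real and \<alpha> :: real and f :: nat
  assumes finV: "finite V" and finE: "finite E"
    and edges: "\<And>e. e \<in> E \<Longrightarrow> e \<noteq> {} \<and> e \<subseteq> V \<and> card e \<le> f"
    and wpos: "\<And>v. v \<in> V \<Longrightarrow> w v \<ge> 0"
    and bpos: "0 < \<beta>" and blt: "\<beta> < 1" and agt: "\<alpha> > 1"
begin

abbreviation s where "s n \<equiv> mw_run V E w \<beta> \<alpha> n"

definition JJ where "JJ st = {v \<in> V. v \<notin> trm st \<and> (\<Sum>e\<in>Einc E v. dlt st e) \<ge> (1 - \<beta>) * w v}"
definition NCC where "NCC st = {e \<in> E. e \<notin> cov st \<and> (\<exists>v\<in>JJ st. e \<in> Ep st v)}"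
definition EP where "EP st = (\<lambda>v. if v \<in> V \<and> v \<notin> trm st \<and> v \<notin> JJ st then Ep st v - {e \<in> NCC st. v \<in> e} else Ep st v)"
definition TT where "TT st = trm st \<union> JJ st \<union> {v \<in> V. v \<notin> trm st \<and> v \<notin> JJ st \<and> EP st v = {}}"
definition stk where "stk st = (\<lambda>v. (\<Sum>e\<in>EP st v. deal st e) > (\<beta> / \<alpha>) * w v)"
definition gs where "gs st = (\<lambda>e. \<exists>v \<in> V - TT st. e \<in> EP st v \<and> stk st v)"

lemma step_eq:
  "inC (mw_step V E w \<beta> \<alpha> st) = inC st \<union> JJ st"
  "cov (mw_step V E w \<beta> \<alpha> st) = cov st \<union> NCC st"
  "Ep (mw_step V E w \<beta> \<alpha> st) = EP st"
  "trm (mw_step V E w \<beta> \<alpha> st) = TT st"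
  "deal (mw_step V E w \<beta> \<alpha> st) = (\<lambda>e. if e \<in> E \<and> e \<notin> cov st \<union> NCC st \<and> \<not> gs st e then \<alpha> * deal st e else deal st e)"
  "dlt (mw_step V E w \<beta> \<alpha> st) = (\<lambda>e. if e \<in> E \<and> e \<notin> cov st \<union> NCC st then dlt st e + (if e \<in> E \<and> e \<notin> cov st \<union> NCC st \<and> \<not> gs st e then \<alpha> * deal st e else deal st e) else dlt st e)"
  unfolding mw_step_def Let_def JJ_def NCC_def EP_def TT_def stk_def gs_def by simp_all

lemma init_eq:
  "cov (mw_init V E w \<beta>) = {}" "Ep (mw_init V E w \<beta>) = Einc E" "trm (mw_init V E w \<beta>) = {v \<in> V. Einc E v = {}}"
  "deal (mw_init V E w \<beta>) = (\<lambda>e. \<beta> * Min ((\<lambda>v. w v / real (card (Einc E v))) ` e))"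
  "dlt (mw_init V E w \<beta>) = (\<lambda>e. \<beta> * Min ((\<lambda>v. w v / real (card (Einc E v))) ` e))"
  by (simp_all add: mw_init_def Let_def)

lemma finEinc: "finite (Einc E v)" using finE by (simp add: Einc_def)

lemma cardEinc: "e \<in> E \<Longrightarrow> v \<in> e \<Longrightarrow> card (Einc E v) \<ge> 1"
  using finEinc[of v] by (metis Einc_def One_nat_def Suc_leI card_gt_0_iff empty_iff mem_Collect_eq)

lemma deal0_nonneg: assumes "e \<in> E" shows "deal (s 0) e \<ge> 0"
proof -
  have fe: "finite e" "e \<noteq> {}" using edges[OF assms] finV finite_subset by auto
  have "Min ((\<lambda>v. w v / real (card (Einc E v))) ` e) \<ge> 0"
    using fe edges[OF assms] wpos by (subst Min_ge_iff) auto
  then show ?thesis using bpos by (simp add: init_eq)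
qed

lemma nonneg: "e \<in> E \<Longrightarrow> deal (s n) e \<ge> 0 \<and> dlt (s n) e \<ge> 0"
proof (induction n)
  case 0 then show ?case using deal0_nonneg by (simp add: init_eq)
next
  case (Suc n) then show ?case using agt by (simp add: step_eq)
qed

lemma trmV: "trm (s n) \<subseteq> V"
  by (induction n) (auto simp: init_eq step_eq TT_def JJ_def)

lemma covE: "cov (s n) \<subseteq> E"
  by (induction n) (auto simp: init_eq step_eq NCC_def)

lemma cov_mono1: "cov (s n) \<subseteq> cov (s (Suc n))" by (simp add: step_eq)
lemma trm_mono1: "trm (s n) \<subseteq> trm (s (Suc n))" by (auto simp add: step_eq TT_def)

lemma cov_mono: "m \<le> n \<Longrightarrow> cov (s m) \<subseteq> cov (s n)"
  using lift_Suc_mono_le[of "\<lambda>n. cov (s n)"] cov_mono1 by blast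
lemma trm_mono: "m \<le> n \<Longrightarrow> trm (s m) \<subseteq> trm (s n)"
  using lift_Suc_mono_le[of "\<lambda>n. trm (s n)"] trm_mono1 by blast

lemma invP: "v \<in> V \<Longrightarrow> v \<notin> trm (s n) \<Longrightarrow> Ep (s n) v = {e \<in> Einc E v. e \<notin> cov (s n)}"
proof (induction n)
  case 0 then show ?case by (simp add: init_eq)
next
  case (Suc n)
  have a: "v \<notin> trm (s n)" "v \<notin> JJ (s n)" using Suc.prems by (auto simp: step_eq TT_def)
  then have "Ep (s (Suc n)) v = Ep (s n) v - {e \<in> NCC (s n). v \<in> e}"
    using Suc.prems by (simp add: step_eq EP_def)
  then show ?case using Suc.IH[OF Suc.prems(1) a(1)] by (auto simp: step_eq Einc_def)
qed

lemma invQ: "e \<in> E \<Longrightarrow> e \<notin> cov (s n) \<Longrightarrow> v \<in> e \<Longrightarrow> v \<notin> trm (s n)"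
proof (induction n)
  case 0 then show ?case by (auto simp: init_eq Einc_def)
next
  case (Suc n)
  have ncov: "e \<notin> cov (s n)" using Suc.prems by (simp add: step_eq)
  have vn: "v \<notin> trm (s n)" using Suc.IH[OF Suc.prems(1) ncov Suc.prems(3)] .
  have vV: "v \<in> V" using edges[OF Suc.prems(1)] Suc.prems(3) by auto
  have eEp: "e \<in> Ep (s n) v" using invP[OF vV vn] ncov Suc.prems by (auto simp: Einc_def)
  have vJ: "v \<notin> JJ (s n)"
  proof
    assume "v \<in> JJ (s n)"
    then have "e \<in> NCC (s n)" using eEp ncov Suc.prems(1) by (auto simp: NCC_def)
    then show False using Suc.prems(2) by (simp add: step_eq)
  qed
  have "e \<in> EP (s n) v" using eEp vJ vn vV Suc.prems(2) by (auto simp: EP_def step_eq)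
  then show ?case using vn vJ by (auto simp: step_eq TT_def)
qed


definition D where "D n v = (\<Sum>e\<in>Einc E v. dlt (s n) e)"
definition K where "K n v = (\<Sum>i<n. (if v \<notin> trm (s (Suc i)) \<and> stk (s i) v then 1 else 0 :: real))"
definition R where "R n e = (\<Sum>i<n. (if \<not> gs (s i) e then 1 else 0 :: nat))"

lemma EincE: "Einc E v \<subseteq> E" by (auto simp: Einc_def)

lemma dlt_mono1: "e \<in> E \<Longrightarrow> dlt (s n) e \<le> dlt (s (Suc n)) e"
  using nonneg[of e n] agt by (auto simp: step_eq)

lemma D_mono: "D n v \<le> D (Suc n) v"
  unfolding D_def by (rule sum_mono) (use dlt_mono1 EincE in blast)

lemma D_nonneg: "D n v \<ge> 0"
  unfolding D_def by (rule sum_nonneg) (use nonneg EincE in blast)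

lemma D_stuck:
  assumes vV: "v \<in> V" and vt: "v \<notin> trm (s (Suc n))" and st: "stk (s n) v"
  shows "D (Suc n) v \<ge> D n v + \<beta> / \<alpha> * w v"
proof -
  let ?A = "EP (s n) v"
  have A: "?A = {e \<in> Einc E v. e \<notin> cov (s (Suc n))}"
    using invP[OF vV vt] by (simp add: step_eq)
  have AE: "?A \<subseteq> Einc E v" using A by auto
  have h1: "D (Suc n) v - D n v = (\<Sum>e\<in>Einc E v. dlt (s (Suc n)) e - dlt (s n) e)"
    unfolding D_def by (simp add: sum_subtractf)
  have h2: "(\<Sum>e\<in>Einc E v. dlt (s (Suc n)) e - dlt (s n) e) \<ge> (\<Sum>e\<in>?A. dlt (s (Suc n)) e - dlt (s n) e)"
    by (rule sum_mono2[OF finEinc AE]) (use dlt_mono1 EincE in force)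
  have h3: "(\<Sum>e\<in>?A. dlt (s (Suc n)) e - dlt (s n) e) \<ge> (\<Sum>e\<in>?A. deal (s n) e)"
  proof (rule sum_mono)
    fix e assume "e \<in> ?A"
    then have "e \<in> E" "e \<notin> cov (s n) \<union> NCC (s n)" using A by (auto simp: Einc_def step_eq)
    then show "deal (s n) e \<le> dlt (s (Suc n)) e - dlt (s n) e"
      using nonneg[of e n] agt mult_right_mono[of 1 \<alpha> "deal (s n) e"] by (auto simp: step_eq)
  qed
  show ?thesis using h1 h2 h3 st unfolding stk_def by linarith
qed

lemma DK: "v \<in> V \<Longrightarrow> D n v \<ge> \<beta> / \<alpha> * w v * K n v"
proof (induction n)
  case 0 then show ?case using D_nonneg by (simp add: K_def)
next
  case (Suc n)
  show ?case
  proof (cases "v \<notin> trm (s (Suc n)) \<and> stk (s n) v")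
    case True
    then have "K (Suc n) v = K n v + 1" by (simp add: K_def)
    moreover have "D (Suc n) v \<ge> D n v + \<beta> / \<alpha> * w v" using D_stuck[OF Suc.prems] True by blast
    ultimately show ?thesis using Suc.IH[OF Suc.prems]
      by (simp add: distrib_left)
  next
    case False
    then have "K (Suc n) v = K n v" by (auto simp: K_def)
    then show ?thesis using D_mono[of n v] Suc.IH[OF Suc.prems] by simp
  qed
qed

lemma K_nonneg: "K n v \<ge> 0" unfolding K_def by (rule sum_nonneg) auto

lemma Kb: "v \<in> V \<Longrightarrow> K n v \<le> \<alpha> / \<beta>"
proof (induction n)
  case 0 then show ?case using agt bpos by (simp add: K_def)
next
  case (Suc n)
  show ?case
  proof (cases "v \<in> trm (s (Suc n))")
    case True
    then have "K (Suc n) v = K n v" by (auto simp: K_def)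
    then show ?thesis using Suc by simp
  next
    case False
    have K1: "K (Suc n) v \<le> K n v + 1" by (simp add: K_def)
    have "v \<notin> trm (s n)" "v \<notin> JJ (s n)" using False by (auto simp: step_eq TT_def)
    then have Dl: "D n v < (1 - \<beta>) * w v" using Suc.prems by (auto simp: JJ_def D_def)
    have wp: "w v > 0" using Dl D_nonneg[of n v] blt
      by (smt (verit) mult_nonneg_nonpos)
    have "\<beta> / \<alpha> * w v * K n v < (1 - \<beta>) * w v" using DK[OF Suc.prems, of n] Dl by linarith
    then have "\<beta> / \<alpha> * K n v < 1 - \<beta>" using wp
      by (metis mult.commute mult.left_commute mult_less_cancel_left_pos)
    then have "K n v < (1 - \<beta>) * \<alpha> / \<beta>" using bpos agt
      by (simp add: field_simps)
    moreover have "(1 - \<beta>) * \<alpha> / \<beta> + 1 \<le> \<alpha> / \<beta>" using bpos agt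
      by (simp add: field_simps)
    ultimately show ?thesis using K1 by linarith
  qed
qed


lemma fin_e: "e \<in> E \<Longrightarrow> finite e \<and> e \<noteq> {}"
  using edges finV finite_subset by blast

lemma deal0_le: assumes "e \<in> E" "v \<in> e" shows "deal (s 0) e \<le> \<beta> * w v"
proof -
  have "Min ((\<lambda>v. w v / real (card (Einc E v))) ` e) \<le> w v / real (card (Einc E v))"
    using fin_e[OF assms(1)] assms(2) by (intro Min_le) auto
  also have "\<dots> \<le> w v"
  proof -
    have c1: "real (card (Einc E v)) \<ge> 1" using cardEinc[OF assms] by simp
    have w0: "w v \<ge> 0" using wpos[of v] edges[OF assms(1)] assms(2) by auto
    have "w v * 1 \<le> w v * real (card (Einc E v))" using c1 w0 by (intro mult_left_mono) auto
    then show ?thesis using c1 by (simp add: divide_le_eq)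
  qed
  finally show ?thesis using bpos by (simp add: init_eq)
qed

lemma edge_deal: "e \<in> E \<Longrightarrow> e \<notin> cov (s n) \<Longrightarrow>
   deal (s n) e = \<alpha> ^ (R n e) * deal (s 0) e \<and> (\<forall>v\<in>e. deal (s n) e \<le> \<beta> * w v)"
proof (induction n)
  case 0 then show ?case using deal0_le by (simp add: R_def)
next
  case (Suc n)
  have ncov: "e \<notin> cov (s n)" "e \<notin> NCC (s n)" using Suc.prems by (auto simp: step_eq)
  note IH = Suc.IH[OF Suc.prems(1) ncov(1)]
  show ?case
  proof (cases "gs (s n) e")
    case True
    have eqs: "deal (s (Suc n)) e = deal (s n) e" "R (Suc n) e = R n e"
      using True by (auto simp: step_eq R_def)
    show ?thesis using IH eqs by metis
  next
    case False
    have b: "\<alpha> * deal (s n) e \<le> \<beta> * w v" if ve: "v \<in> e" for v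
    proof -
      have vV: "v \<in> V" using edges[OF Suc.prems(1)] ve by auto
      have vt: "v \<notin> TT (s n)" using invQ[OF Suc.prems ve] by (simp add: step_eq)
      have eA: "e \<in> EP (s n) v" using invP[OF vV, of "Suc n"] vt Suc.prems ve
        by (auto simp: step_eq Einc_def)
      have ns: "\<not> stk (s n) v" using False vV vt eA by (auto simp: gs_def)
      have fA: "finite (EP (s n) v)"
        using invP[OF vV, of "Suc n"] vt finEinc[of v] by (simp add: step_eq)
      have AE: "EP (s n) v \<subseteq> E" using invP[OF vV, of "Suc n"] vt by (auto simp: step_eq Einc_def)
      have "deal (s n) e \<le> (\<Sum>e\<in>EP (s n) v. deal (s n) e)"
        by (rule member_le_sum[OF eA _ fA]) (use nonneg AE in blast)
      also have "\<dots> \<le> \<beta> / \<alpha> * w v" using ns by (simp add: stk_def)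
      finally have "deal (s n) e \<le> \<beta> / \<alpha> * w v" .
      then show ?thesis using agt by (simp add: field_simps)
    qed
    have "deal (s (Suc n)) e = \<alpha> * deal (s n) e" "R (Suc n) e = Suc (R n e)"
      using False Suc.prems ncov by (auto simp: step_eq R_def)
    then show ?thesis using IH b by simp
  qed
qed

lemma w0_cov: assumes "e \<in> E" "u \<in> e" "w u = 0" shows "e \<in> cov (s (Suc 0))"
proof -
  have uV: "u \<in> V" using edges[OF assms(1)] assms(2) by auto
  have eI: "e \<in> Einc E u" using assms by (simp add: Einc_def)
  have "u \<notin> trm (s 0)" using eI by (auto simp: init_eq)
  moreover have "(\<Sum>e\<in>Einc E u. dlt (s 0) e) \<ge> 0" using D_nonneg[of 0 u] by (simp add: D_def)
  ultimately have "u \<in> JJ (s 0)" using uV assms(3) by (simp add: JJ_def)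
  then have "e \<in> NCC (s 0)" using eI assms(1) by (auto simp: NCC_def init_eq)
  then show ?thesis by (simp add: step_eq)
qed

lemma Delta_ge: "v \<in> V \<Longrightarrow> card (Einc E v) \<le> Delta V E"
  unfolding Delta_def using finV by (intro Max_ge) auto

lemma raises: assumes "e \<in> E" "e \<notin> cov (s n)" shows "real (R n e) \<le> log \<alpha> (real (Delta V E))"
proof -
  have "Min ((\<lambda>v. w v / real (card (Einc E v))) ` e) \<in> (\<lambda>v. w v / real (card (Einc E v))) ` e"
    by (rule Min_in) (use fin_e[OF assms(1)] in auto)
  then obtain u where ue: "u \<in> e" and um: "Min ((\<lambda>v. w v / real (card (Einc E v))) ` e) = w u / real (card (Einc E u))"
    by auto
  have uV: "u \<in> V" using edges[OF assms(1)] ue by auto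
  have d1: "card (Einc E u) \<ge> 1" using cardEinc[OF assms(1) ue] .
  have dD: "card (Einc E u) \<le> Delta V E" using Delta_ge[OF uV] .
  have logpos: "log \<alpha> (real (Delta V E)) \<ge> 0" using d1 dD agt by simp
  show ?thesis
  proof (cases n)
    case 0 then show ?thesis using logpos by (simp add: R_def)
  next
    case (Suc m)
    have wp: "w u > 0"
    proof (rule ccontr)
      assume "\<not> w u > 0"
      then have "w u = 0" using wpos[OF uV] by simp
      then have "e \<in> cov (s (Suc 0))" using w0_cov[OF assms(1) ue] by simp
      then show False using cov_mono[of "Suc 0" n] Suc assms(2) by auto
    qed
    have ed: "\<alpha> ^ (R n e) * deal (s 0) e \<le> \<beta> * w u" using edge_deal[OF assms] ue by metis
    have "deal (s 0) e = \<beta> * (w u / real (card (Einc E u)))" using um by (simp add: init_eq)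
    then have "\<alpha> ^ (R n e) * (\<beta> * w u) / real (card (Einc E u)) \<le> \<beta> * w u" using ed by simp
    then have "\<alpha> ^ (R n e) \<le> real (card (Einc E u))" using wp bpos d1
      by (simp add: field_simps)
    also have "\<dots> \<le> real (Delta V E)" using dD by simp
    finally have pa: "\<alpha> ^ (R n e) \<le> real (Delta V E)" .
    have "real (R n e) = log \<alpha> (\<alpha> ^ (R n e))" using agt by (simp add: log_nat_power)
    also have "\<dots> \<le> log \<alpha> (real (Delta V E))" using pa agt d1 dD by (subst log_le_cancel_iff) auto
    finally show ?thesis .
  qed
qed

lemma edge_total: assumes "e \<in> E" "e \<notin> cov (s n)"
  shows "real n \<le> log \<alpha> (real (Delta V E)) + real f * \<alpha> / \<beta>"
proof -
  let ?ind = "\<lambda>i v. (if v \<notin> trm (s (Suc i)) \<and> stk (s i) v then 1 else 0 :: real)"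
  have split: "real n = real (R n e) + (\<Sum>i<n. (if gs (s i) e then 1 else 0 :: real))"
    unfolding R_def by (induction n) auto
  have pw: "(if gs (s i) e then 1 else 0 :: real) \<le> (\<Sum>v\<in>e. ?ind i v)" for i
  proof (cases "gs (s i) e")
    case True
    then obtain v where v: "v \<in> V" "v \<notin> TT (s i)" "e \<in> EP (s i) v" "stk (s i) v"
      unfolding gs_def by blast
    have "v \<in> e" using invP[OF v(1), of "Suc i"] v(2,3) by (auto simp: step_eq Einc_def)
    then have "?ind i v \<le> (\<Sum>v\<in>e. ?ind i v)"
      using fin_e[OF assms(1)] by (intro member_le_sum) auto
    then show ?thesis using True v by (simp add: step_eq)
  next
    case False then show ?thesis by (simp add: sum_nonneg)
  qed
  have "(\<Sum>i<n. (if gs (s i) e then 1 else 0 :: real)) \<le> (\<Sum>i<n. \<Sum>v\<in>e. ?ind i v)"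
    by (rule sum_mono) (rule pw)
  also have "\<dots> = (\<Sum>v\<in>e. K n v)" unfolding K_def by (rule sum.swap)
  also have "\<dots> \<le> (\<Sum>v\<in>e. \<alpha> / \<beta>)" using Kb edges[OF assms(1)] by (intro sum_mono) auto
  also have "\<dots> = real (card e) * (\<alpha> / \<beta>)" by simp
  also have "\<dots> \<le> real f * (\<alpha> / \<beta>)" using edges[OF assms(1)] agt bpos
    by (intro mult_right_mono) auto
  finally show ?thesis using split raises[OF assms] by simp
qed

lemma terminates: assumes "Delta V E \<ge> 1"
  defines "N \<equiv> nat \<lfloor>log \<alpha> (real (Delta V E)) + real f * \<alpha> / \<beta>\<rfloor> + 1"
  shows "mw_all_terminated V E w \<beta> \<alpha> N"
proof -
  have x0: "log \<alpha> (real (Delta V E)) + real f * \<alpha> / \<beta> \<ge> 0"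
    using assms(1) agt bpos by simp
  have Ngt: "real N > log \<alpha> (real (Delta V E)) + real f * \<alpha> / \<beta>"
    unfolding N_def using x0 by linarith
  have allcov: "cov (s N) = E" using edge_total Ngt covE by fastforce
  have "trm (s N) = V"
  proof (rule ccontr)
    assume "trm (s N) \<noteq> V"
    then obtain v where v: "v \<in> V" "v \<notin> trm (s N)" using trmV by blast
    have NS: "N = Suc (N - 1)" unfolding N_def by simp
    have "v \<notin> TT (s (N - 1))" using v(2) NS by (metis step_eq(4) mw_run.simps(2))
    then have "EP (s (N - 1)) v \<noteq> {}" using v(1) by (auto simp: TT_def)
    then have "Ep (s N) v \<noteq> {}" using NS by (metis step_eq(3) mw_run.simps(2))
    then show False using invP[OF v] allcov by (auto simp: Einc_def)
  qed
  then show ?thesis using allcov by (simp add: mw_all_terminated_def)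
qed

end

theorem mainTheorem6:
  "\<exists>c::real. c > 0 \<and>
    (\<forall>(V::'v set) (E::'v set set) (f::nat) (w::'v \<Rightarrow> real) (\<epsilon>::real) (\<alpha>::real).
      finite V \<and> finite E \<and> (\<forall>e\<in>E. e \<noteq> {} \<and> e \<subseteq> V \<and> card e \<le> f) \<and>
      (\<forall>v\<in>V. w v \<ge> 0) \<and> Delta V E \<ge> 3 \<and> 0 < \<epsilon> \<and> \<epsilon> \<le> 1 \<and> \<alpha> > 1
      \<longrightarrow> (let \<beta> = \<epsilon> / (real f + \<epsilon>) in
            (\<exists>i. mw_all_terminated V E w \<beta> \<alpha> i) \<and>
            real (mw_iterations V E w \<beta> \<alpha>)
              \<le> c * (log \<alpha> (real (Delta V E)) + real f * \<alpha> / \<beta>)))"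
proof (rule exI[of _ 2], rule conjI, simp, intro allI impI)
  fix V :: "'v set" and E :: "'v set set" and f :: nat and w :: "'v \<Rightarrow> real" and \<epsilon> \<alpha> :: real
  assume H: "finite V \<and> finite E \<and> (\<forall>e\<in>E. e \<noteq> {} \<and> e \<subseteq> V \<and> card e \<le> f) \<and>
      (\<forall>v\<in>V. w v \<ge> 0) \<and> Delta V E \<ge> 3 \<and> 0 < \<epsilon> \<and> \<epsilon> \<le> 1 \<and> \<alpha> > 1"
  define \<beta> where "\<beta> = \<epsilon> / (real f + \<epsilon>)"
  have b0: "\<beta> > 0" using H by (simp add: \<beta>_def)
  have logpos: "log \<alpha> (real (Delta V E)) \<ge> 0" using H by simp
  have "(\<exists>i. mw_all_terminated V E w \<beta> \<alpha> i) \<and>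
            real (mw_iterations V E w \<beta> \<alpha>)
              \<le> 2 * (log \<alpha> (real (Delta V E)) + real f * \<alpha> / \<beta>)"
  proof (cases "E = {}")
    case True
    have t0: "mw_all_terminated V E w \<beta> \<alpha> 0"
      using True by (auto simp: mw_all_terminated_def mw_init_def Let_def Einc_def)
    then have "mw_iterations V E w \<beta> \<alpha> = 0" unfolding mw_iterations_def
      by (metis Least_le le_zero_eq)
    moreover have "real f * \<alpha> / \<beta> \<ge> 0" using H b0 by simp
    ultimately show ?thesis using t0 logpos by auto
  next
    case False
    then obtain e where e: "e \<in> E" by auto
    have "card e \<ge> 1" using H e by (metis One_nat_def Suc_leI card_gt_0_iff finite_subset)
    then have f1: "f \<ge> 1" using H e by auto
    have b1: "\<beta> < 1" using H f1 by (simp add: \<beta>_def)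
    interpret mw V E w \<beta> \<alpha> f
      using H b0 b1 by unfold_locales auto
    define N where "N \<equiv> nat \<lfloor>log \<alpha> (real (Delta V E)) + real f * \<alpha> / \<beta>\<rfloor> + 1"
    have tN: "mw_all_terminated V E w \<beta> \<alpha> N" unfolding N_def using H by (intro terminates) auto
    have "mw_iterations V E w \<beta> \<alpha> \<le> N" unfolding mw_iterations_def using tN by (rule Least_le)
    moreover have "real N \<le> log \<alpha> (real (Delta V E)) + real f * \<alpha> / \<beta> + 1"
      unfolding N_def using logpos b0 H by simp
    moreover have "real f * \<alpha> / \<beta> \<ge> 1"
    proof -
      have "\<alpha> / \<beta> \<ge> 1" using H b0 b1 by (simp add: field_simps)
      moreover have "real f \<ge> 1" using f1 by simp
      ultimately have "real f * (\<alpha> / \<beta>) \<ge> 1 * 1" by (intro mult_mono) auto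
      then show ?thesis by simp
    qed
    ultimately show ?thesis using tN logpos by auto
  qed
  then show "let \<beta> = \<epsilon> / (real f + \<epsilon>) in
            (\<exists>i. mw_all_terminated V E w \<beta> \<alpha> i) \<and>
            real (mw_iterations V E w \<beta> \<alpha>)
              \<le> 2 * (log \<alpha> (real (Delta V E)) + real f * \<alpha> / \<beta>)"
    by (simp add: \<beta>_def Let_def)
qed

end
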